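(* Consider the problem $\min_{x\in\mathbb{R}^n} f(x):=F(x)+h(x)$, where $h:\mathbb{R}^n\to\mathbb{R}\cup\{+\infty\}$ is a proper closed convex function, $F:\mathbb{R}^n\to\mathbb{R}$ is lower semicontinuous (possibly nonconvex), $\mathrm{dom}\, f=\mathrm{dom}\, h$, and there is $f_\infty>-\infty$ with $f(x)\ge f_\infty$ for all $x\in\mathrm{dom}\, f$. Fix $q\in[0,2)$, $\rho>0$, $L>0$, $\delta\ge0$ and $\beta,\zeta\in[0,1)$, and set for all $k\ge0$ $$\delta_k=\frac{\delta}{(k+1)^{\frac{\beta(2-q)}{2}}},\qquad \alpha_k=\frac{1}{(L+q\rho)(k+1)^{\zeta}}.$$ Let $x_0\in\mathrm{dom}\, h$ and let $(x_k)_{k\ge0}$ be generated by $x_{k+1}=\mathrm{prox}_{\alpha_k h}(x_k-\alpha_k g_k)$, where $\mathrm{prox}_{\gamma h}(z):=\arg\min_{y\in\mathrm{dom}\, h}\{h(y)+\tfrac{1}{2\gamma}\|z-y\|^2\}$ and at each iteration $k$ the vector $g_k$ satisfies $$F(x)-\big(F(x_k)+\langle g_k,x-x_k\rangle\big)\le \frac{L}{2}\|x-x_k\|^2+\delta_k\|x-x_k\|^q\quad\text{for all } x\in\mathrm{dom}\, f.$$ Let $p_{j+1}:=-\frac{1}{\alpha_j}(x_{j+1}-x_j)-g_j\in\partial h(x_{j+1})$. Then for all $k\ge0$, $$\min_{j=0,\dots,k}\|g_j+p_{j+1}\|^2\le \frac{2(L+q\rho)(f(x_0)-f_\infty)}{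(1-\zeta)(k+1)^{1-\zeta}}+\frac{(2-q)(L+q\rho)\,\delta^{\frac{2}{2-q}}}{(1-\zeta)(1-\beta)\,\rho^{\frac{q}{2-q}}\,(k+1)^{\beta-\zeta}}.$$
   Context: $\|\cdot\|$ is the Euclidean norm and $\partial h$ the convex subdifferential of $h$. The condition on $g_k$ is the paper's "inexact first-order $(\delta_k,L)$-oracle of degree $q$" at $x_k$. *)

theory Defs
  imports "HOL-Analysis.Analysis"
begin

definition edom :: "('a \<Rightarrow> ereal) \<Rightarrow> 'a set" where
  "edom h = {x. h x < \<infinity>}"

definition proper_fun :: "('a \<Rightarrow> ereal) \<Rightarrow> bool" where
  "proper_fun h \<longleftrightarrow> (\<forall>x. h x \<noteq> -\<infinity>) \<and> (\<exists>x. h x < \<infinity>)"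

definition closed_fun :: "('a::real_normed_vector \<Rightarrow> ereal) \<Rightarrow> bool" where
  "closed_fun h \<longleftrightarrow> closed {(x, t::real). h x \<le> ereal t}"

definition convex_efun :: "('a::real_vector \<Rightarrow> ereal) \<Rightarrow> bool" where
  "convex_efun h \<longleftrightarrow> (\<forall>x y t. 0 \<le> t \<and> t \<le> 1 \<longrightarrow>
      h ((1 - t) *\<^sub>R x + t *\<^sub>R y) \<le> ereal (1 - t) * h x + ereal t * h y)"

definition lsc_fun :: "('a::topological_space \<Rightarrow> real) \<Rightarrow> bool" where
  "lsc_fun F \<longleftrightarrow> (\<forall>t. closed {x. F x \<le> t})"

definition prox_set :: "real \<Rightarrow> ('a::real_normed_vector \<Rightarrow> ereal) \<Rightarrow> 'a \<Rightarrow> 'a set" where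
  "prox_set \<gamma> h z = {y \<in> edom h. \<forall>w \<in> edom h.
      h y + ereal (norm (z - y)^2 / (2 * \<gamma>)) \<le> h w + ereal (norm (z - w)^2 / (2 * \<gamma>))}"

end

theory Submission
  imports Defs
begin

lemma young_q:
  fixes t d r q :: real
  assumes t: "t \<ge> 0" and d: "d \<ge> 0" and r: "r > 0" and q: "0 \<le> q" "q < 2"
  shows "d * t powr q \<le> q * r / 2 * t^2 + (2 - q) / 2 * d powr (2 / (2 - q)) / r powr (q / (2 - q))"
proof (cases "t = 0 \<or> d = 0")
  case True
  then show ?thesis using q r by auto
next
  case False
  then have t': "t > 0" and d': "d > 0" using t d by auto
  define a where "a = r * t^2"
  define b where "b = d powr (2 / (2 - q)) / r powr (q / (2 - q))"
  have a0: "a > 0" using t' r by (simp add: a_def)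
  have b0: "b > 0" using d' r by (simp add: b_def)
  have Y: "a powr (q/2) * b powr (1 - q/2) \<le> (q/2) * a + (1 - q/2) * b"
    by (rule Youngs_inequality_0) (use q a0 b0 in auto)
  have "a powr (q/2) = r powr (q/2) * t powr q"
  proof -
    have t2: "t powr 2 = t^2" using t' by simp
    have "(t^2) powr (q/2) = t powr q"
      unfolding t2[symmetric] powr_powr by simp
    moreover have "a powr (q/2) = r powr (q/2) * (t^2) powr (q/2)"
      unfolding a_def using r by (simp add: powr_mult)
    ultimately show ?thesis by simp
  qed
  moreover have "b powr (1 - q/2) = d / r powr (q/2)"
  proof -
    have e: "1 - q/2 = (2-q)/2" by simp
    have "b powr (1 - q/2) = (d powr (2 / (2 - q))) powr ((2-q)/2) / (r powr (q / (2 - q))) powr ((2-q)/2)"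
      unfolding b_def e using d' r by (simp add: powr_divide)
    also have "\<dots> = d / r powr (q/2)"
    proof -
      have e1: "2 / (2 - q) * ((2 - q) / 2) = 1" using q by (simp add: field_simps)
      have e2: "q / (2 - q) * ((2 - q) / 2) = q / 2" using q by (simp add: field_simps)
      show ?thesis unfolding powr_powr e1 e2 using d' by simp
    qed
    finally show ?thesis .
  qed
  ultimately have e0: "a powr (q/2) * b powr (1 - q/2) = d * t powr q"
    using r by (simp add: field_simps)
  have e3: "(q/2) * a = q * r / 2 * t^2" unfolding a_def by simp
  have e4: "(1 - q/2) * b = (2 - q) / 2 * d powr (2/(2-q)) / r powr (q/(2-q))"
    unfolding b_def by (simp add: field_simps)
  show ?thesis using Y e0 e3 e4 by linarith
qed

lemma concave_step:
  fixes s a b :: real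
  assumes "0 \<le> s" "s \<le> 1" "0 < b" "b \<le> a"
  shows "s * a powr (s - 1) * (a - b) \<le> a powr s - b powr s"
proof -
  have Y: "(b/a) powr s * 1 powr (1 - s) \<le> s * (b/a) + (1 - s) * 1"
    by (rule Youngs_inequality_0) (use assms in auto)
  hence "b powr s / a powr s \<le> s * (b/a) + (1 - s)"
    using assms by (simp add: powr_divide)
  hence "b powr s \<le> a powr s * (s * (b/a) + (1 - s))"
    using assms by (simp add: divide_le_eq mult.commute)
  also have "\<dots> = a powr s - s * a powr (s - 1) * (a - b)"
    using assms by (simp add: powr_diff field_simps)
  finally show ?thesis by simp
qed

lemma sum_powr_bound:
  fixes \<beta> :: real
  assumes "0 \<le> \<beta>" "\<beta> < 1"
  shows "(\<Sum>j\<le>k. 1 / (real j + 1) powr \<beta>) \<le> (real k + 1) powr (1 - \<beta>) / (1 - \<beta>)"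
proof (induction k)
  case 0
  then show ?case using assms by (simp add: divide_simps)
next
  case (Suc k)
  have c: "(1 - \<beta>) * (real k + 2) powr (1 - \<beta> - 1) * ((real k + 2) - (real k + 1))
      \<le> (real k + 2) powr (1 - \<beta>) - (real k + 1) powr (1 - \<beta>)"
    by (rule concave_step) (use assms in auto)
  have "(real k + 2) powr (1 - \<beta> - 1) = 1 / (real k + 2) powr \<beta>"
    by (simp add: powr_minus divide_inverse)
  with c have c2: "1 / (real k + 2) powr \<beta> \<le> ((real k + 2) powr (1 - \<beta>) - (real k + 1) powr (1 - \<beta>)) / (1 - \<beta>)"
    using assms by (simp add: le_divide_eq mult.commute)
  have "(\<Sum>j\<le>Suc k. 1 / (real j + 1) powr \<beta>) = (\<Sum>j\<le>k. 1 / (real j + 1) powr \<beta>) + 1 / (real k + 2) powr \<beta>"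
    by (simp add: add.commute)
  also have "\<dots> \<le> (real k + 1) powr (1 - \<beta>) / (1 - \<beta>) + ((real k + 2) powr (1 - \<beta>) - (real k + 1) powr (1 - \<beta>)) / (1 - \<beta>)"
    using Suc c2 by linarith
  also have "\<dots> = (real (Suc k) + 1) powr (1 - \<beta>) / (1 - \<beta>)"
    by (simp add: diff_divide_distrib add.commute)
  finally show ?case .
qed

lemma small_t:
  fixes a b D :: real
  assumes "D \<ge> 0" and "\<And>t. 0 < t \<Longrightarrow> t \<le> 1 \<Longrightarrow> a \<le> b + t * D"
  shows "a \<le> b"
proof (rule ccontr)
  assume "\<not> a \<le> b"
  hence e: "a - b > 0" by simp
  define t where "t = min 1 ((a - b) / (2 * (D + 1)))"
  have t0: "t > 0" using e assms(1) by (simp add: t_def)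
  have t1: "t \<le> 1" by (simp add: t_def)
  have "t * D \<le> (a - b) / (2 * (D + 1)) * D"
    using assms(1) by (intro mult_right_mono) (auto simp: t_def)
  also have "\<dots> < a - b"
  proof -
    have "D / (2 * (D + 1)) < 1" using assms(1) by (simp add: field_simps)
    hence "(a - b) * (D / (2 * (D + 1))) < (a - b) * 1" using e by (intro mult_strict_left_mono) auto
    thus ?thesis by simp
  qed
  finally show False using assms(2)[OF t0 t1] by simp
qed

lemma norm_sub_scale_sq:
  fixes u v :: "'a::real_inner"
  shows "norm (u - t *\<^sub>R v)^2 = norm u^2 - 2 * t * (u \<bullet> v) + t^2 * norm v^2"
  unfolding power2_norm_eq_inner
  by (simp add: inner_diff_left inner_diff_right inner_commute power2_eq_square algebra_simps)

lemma ip_lemma: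
  fixes d g :: "'a::real_inner"
  shows "(- d - a *\<^sub>R g) \<bullet> (- d) = norm d ^2 + a * (g \<bullet> d)"
  by (simp add: power2_norm_eq_inner inner_diff_left inner_diff_right inner_commute[of g d])

lemma lin:
  fixes Hy Hw Hx N1 Nw D c t a :: real
  assumes a: "a > 0" and o: "Hy + N1 / (2 * a) \<le> Hw + Nw / (2 * a)"
   and hw: "Hw \<le> (1 - t) * Hy + t * Hx"
   and n: "Nw = N1 - 2 * t * (D + a * c) + t^2 * D" and t: "t > 0"
  shows "Hy \<le> Hx - D / a - c + t * (D / (2 * a))"
proof -
  have "Nw / (2 * a) = N1 / (2 * a) - t * (D / a + c) + t * (t * (D / (2 * a)))"
    unfolding n using a by (simp add: field_simps power2_eq_square)
  with o hw have "t * Hy \<le> t * (Hx - D / a - c + t * (D / (2 * a)))"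
    by (simp add: algebra_simps)
  thus ?thesis using t by simp
qed
lemma prox_descent:
  fixes h :: "'a::euclidean_space \<Rightarrow> ereal"
  assumes cv: "convex_efun h" and pr: "proper_fun h"
    and y: "y \<in> prox_set \<alpha> h (xk - \<alpha> *\<^sub>R g)" and xk: "xk \<in> edom h" and a: "\<alpha> > 0"
  shows "real_of_ereal (h y) \<le> real_of_ereal (h xk) - norm (y - xk)^2 / \<alpha> - g \<bullet> (y - xk)"
proof -
  define z where "z = xk - \<alpha> *\<^sub>R g"
  have yd: "y \<in> edom h" and opt: "\<forall>w\<in>edom h. h y + ereal (norm (z - y)^2 / (2 * \<alpha>)) \<le> h w + ereal (norm (z - w)^2 / (2 * \<alpha>))"
    using y unfolding prox_set_def z_def by auto
  obtain Hy where Hy: "h y = ereal Hy"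
    using yd pr unfolding edom_def proper_fun_def by (cases "h y") auto
  obtain Hx where Hx: "h xk = ereal Hx"
    using xk pr unfolding edom_def proper_fun_def by (cases "h xk") auto
  define D where "D = norm (y - xk)^2"
  define c where "c = g \<bullet> (y - xk)"
  have ip: "(z - y) \<bullet> (xk - y) = D + \<alpha> * c"
  proof -
    have e1: "z - y = - (y - xk) - \<alpha> *\<^sub>R g" unfolding z_def by (simp add: algebra_simps)
    have e2: "xk - y = - (y - xk)" by simp
    show ?thesis unfolding e1 e2 D_def c_def by (rule ip_lemma)
  qed
  have nv: "norm (xk - y)^2 = D" unfolding D_def by (simp add: norm_minus_commute)
  have key: "Hy \<le> Hx - D / \<alpha> - c + t * (D / (2 * \<alpha>))" if t: "0 < t" "t \<le> 1" for t
  proof -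
    define w where "w = (1 - t) *\<^sub>R y + t *\<^sub>R xk"
    have hw0: "h w \<le> ereal (1 - t) * h y + ereal t * h xk"
      using cv[unfolded convex_efun_def, rule_format, of t y xk] t unfolding w_def by simp
    have hw: "h w \<le> ereal ((1 - t) * Hy + t * Hx)"
      using hw0 unfolding Hx Hy by simp
    have "h w < \<infinity>" by (rule le_less_trans[OF hw]) simp
    hence wd: "w \<in> edom h" unfolding edom_def by simp
    obtain Hw where Hw: "h w = ereal Hw"
      using wd pr unfolding edom_def proper_fun_def by (cases "h w") auto
    have Hw_le: "Hw \<le> (1 - t) * Hy + t * Hx" using hw unfolding Hw by simp
    have o0: "h y + ereal (norm (z - y)^2 / (2 * \<alpha>)) \<le> h w + ereal (norm (z - w)^2 / (2 * \<alpha>))"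
      by (rule bspec[OF opt wd])
    have o: "Hy + norm (z - y)^2 / (2 * \<alpha>) \<le> Hw + norm (z - w)^2 / (2 * \<alpha>)"
      using o0 unfolding Hw Hy by simp
    have zw: "z - w = (z - y) - t *\<^sub>R (xk - y)" unfolding w_def by (simp add: algebra_simps)
    have n1: "norm (z - w)^2 = norm (z - y)^2 - 2 * t * (D + \<alpha> * c) + t^2 * D"
      unfolding zw norm_sub_scale_sq ip nv ..
    show ?thesis by (rule lin[OF a o Hw_le n1 t(1)])
  qed
  have "Hy \<le> Hx - D / \<alpha> - c"
  proof (rule small_t)
    show "0 \<le> D / (2 * \<alpha>)" using a by (simp add: D_def)
  next
    fix t :: real assume "0 < t" "t \<le> 1"
    thus "Hy \<le> Hx - D / \<alpha> - c + t * (D / (2 * \<alpha>))" by (rule key)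
  qed
  thus ?thesis using Hx Hy by (simp add: D_def c_def)
qed

theorem theorem2:
  fixes F :: "'a::euclidean_space \<Rightarrow> real" and h :: "'a \<Rightarrow> ereal"
    and x g :: "nat \<Rightarrow> 'a"
    and f_inf q \<rho> L \<delta> \<beta> \<zeta> :: real
    and \<delta>k \<alpha> :: "nat \<Rightarrow> real" and k :: nat
  assumes h_proper: "proper_fun h" and h_closed: "closed_fun h" and h_convex: "convex_efun h"
    and F_lsc: "lsc_fun F"
    and lower: "\<forall>y\<in>edom h. ereal (F y) + h y \<ge> ereal f_inf"
    and q: "0 \<le> q" "q < 2" and \<rho>: "\<rho> > 0" and L: "L > 0" and \<delta>: "\<delta> \<ge> 0"
    and \<beta>: "0 \<le> \<beta>" "\<beta> < 1" and \<zeta>: "0 \<le> \<zeta>" "\<zeta> < 1"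
    and \<delta>k_def: "\<forall>j. \<delta>k j = \<delta> / (real j + 1) powr (\<beta> * (2 - q) / 2)"
    and \<alpha>_def: "\<forall>j. \<alpha> j = 1 / ((L + q * \<rho>) * (real j + 1) powr \<zeta>)"
    and x0: "x 0 \<in> edom h"
    and step: "\<forall>j. x (Suc j) \<in> prox_set (\<alpha> j) h (x j - \<alpha> j *\<^sub>R g j)"
    and inexact_orc: "\<forall>j. \<forall>y\<in>edom h. F y - (F (x j) + g j \<bullet> (y - x j))
                   \<le> L / 2 * norm (y - x j)^2 + \<delta>k j * norm (y - x j) powr q"
  shows "(let p = (\<lambda>j. - (1 / \<alpha> (j - 1)) *\<^sub>R (x j - x (j - 1)) - g (j - 1)) in
          Min ((\<lambda>j. norm (g j + p (Suc j))^2) ` {..k}))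
         \<le> 2 * (L + q * \<rho>) * (F (x 0) + real_of_ereal (h (x 0)) - f_inf)
              / ((1 - \<zeta>) * (real k + 1) powr (1 - \<zeta>))
           + (2 - q) * (L + q * \<rho>) * \<delta> powr (2 / (2 - q))
              / ((1 - \<zeta>) * (1 - \<beta>) * \<rho> powr (q / (2 - q)) * (real k + 1) powr (\<beta> - \<zeta>))"
proof -
  define K where "K = L + q * \<rho>"
  have K: "K > 0" unfolding K_def using L q \<rho> by (simp add: add_pos_nonneg)
  have pw1: "(real j + 1) powr \<zeta> \<ge> 1" for j
    using \<zeta> by (intro ge_one_powr_ge_zero) auto
  have \<alpha>eq: "\<alpha> j = 1 / (K * (real j + 1) powr \<zeta>)" for j
    using \<alpha>_def unfolding K_def by simp
  have \<alpha>pos: "\<alpha> j > 0" for j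
    unfolding \<alpha>eq using K by simp
  have inv\<alpha>: "1 / \<alpha> j = K * (real j + 1) powr \<zeta>" for j
    unfolding \<alpha>eq by simp
  have inv\<alpha>K: "K \<le> 1 / \<alpha> j" for j
    unfolding inv\<alpha> using K pw1[of j] by simp
  have xin: "x j \<in> edom h" for j
  proof (cases j)
    case 0 then show ?thesis using x0 by simp
  next
    case (Suc i) then show ?thesis using step unfolding prox_set_def by auto
  qed
  define fx where "fx j = F (x j) + real_of_ereal (h (x j))" for j
  define d where "d j = x (Suc j) - x j" for j
  define C where "C = (2 - q) / 2 * \<delta> powr (2 / (2 - q)) / \<rho> powr (q / (2 - q))"
  have C0: "C \<ge> 0" unfolding C_def using q by simp
  have desc: "fx (Suc j) \<le> fx j - norm (d j)^2 / (2 * \<alpha> j) + C * (1 / (real j + 1) powr \<beta>)" for j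
  proof -
    define D where "D = norm (d j)^2"
    have P: "real_of_ereal (h (x (Suc j))) \<le> real_of_ereal (h (x j)) - D / \<alpha> j - g j \<bullet> d j"
      using prox_descent[OF h_convex h_proper step[rule_format, of j] xin[of j] \<alpha>pos[of j]]
      unfolding d_def D_def .
    have O: "F (x (Suc j)) - (F (x j) + g j \<bullet> d j) \<le> L / 2 * D + \<delta>k j * norm (d j) powr q"
      using inexact_orc xin[of "Suc j"] unfolding d_def D_def by blast
    have dk0: "\<delta>k j \<ge> 0" using \<delta>k_def \<delta> by simp
    have Y: "\<delta>k j * norm (d j) powr q \<le> q * \<rho> / 2 * D + (2 - q) / 2 * \<delta>k j powr (2 / (2 - q)) / \<rho> powr (q / (2 - q))"
      unfolding D_def by (rule young_q) (use dk0 \<rho> q in auto)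
    have dk: "\<delta>k j powr (2 / (2 - q)) = \<delta> powr (2 / (2 - q)) * (1 / (real j + 1) powr \<beta>)"
    proof -
      have "\<delta>k j powr (2 / (2 - q)) = \<delta> powr (2 / (2 - q)) / ((real j + 1) powr (\<beta> * (2 - q) / 2)) powr (2 / (2 - q))"
        using \<delta>k_def \<delta> by (simp add: powr_divide)
      also have "((real j + 1) powr (\<beta> * (2 - q) / 2)) powr (2 / (2 - q)) = (real j + 1) powr \<beta>"
        using q by (simp add: powr_powr)
      finally show ?thesis by simp
    qed
    have Cj: "(2 - q) / 2 * \<delta>k j powr (2 / (2 - q)) / \<rho> powr (q / (2 - q)) = C * (1 / (real j + 1) powr \<beta>)"
      unfolding dk C_def by simp
    have KD: "K * D \<le> D / \<alpha> j"
      using mult_right_mono[OF inv\<alpha>K[of j], of D] unfolding D_def by simp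
    have h2: "D / (2 * \<alpha> j) = (D / \<alpha> j) / 2" by simp
    have fxs: "fx (Suc j) = F (x (Suc j)) + real_of_ereal (h (x (Suc j)))" "fx j = F (x j) + real_of_ereal (h (x j))"
      unfolding fx_def by auto
    show ?thesis
      using P O Y Cj KD h2 fxs unfolding D_def[symmetric] K_def by (simp add: algebra_simps) linarith?
  qed
  have tele: "(\<Sum>j\<le>n. norm (d j)^2 / (2 * \<alpha> j)) \<le> fx 0 - fx (Suc n) + C * (\<Sum>j\<le>n. 1 / (real j + 1) powr \<beta>)" for n
  proof (induction n)
    case 0 then show ?case using desc[of 0] by simp
  next
    case (Suc n) then show ?case using desc[of "Suc n"] by (simp add: distrib_left)
  qed
  have fl: "fx (Suc k) \<ge> f_inf"
  proof -
    obtain Hy where Hy: "h (x (Suc k)) = ereal Hy"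
      using xin[of "Suc k"] h_proper unfolding edom_def proper_fun_def by (cases "h (x (Suc k))") auto
    have "ereal (F (x (Suc k))) + h (x (Suc k)) \<ge> ereal f_inf" using lower xin by blast
    thus ?thesis unfolding fx_def Hy by simp
  qed
  have A0: "fx 0 - f_inf \<ge> 0"
  proof -
    obtain H0 where H0: "h (x 0) = ereal H0"
      using xin[of 0] h_proper unfolding edom_def proper_fun_def by (cases "h (x 0)") auto
    have "ereal (F (x 0)) + h (x 0) \<ge> ereal f_inf" using lower xin by blast
    thus ?thesis unfolding fx_def H0 by simp
  qed
  define G where "G j = norm (g j + (- (1 / \<alpha> (Suc j - 1)) *\<^sub>R (x (Suc j) - x (Suc j - 1)) - g (Suc j - 1)))^2" for j
  have Geq: "\<alpha> j * G j = norm (d j)^2 / \<alpha> j" for j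
  proof -
    have "g j + (- (1 / \<alpha> (Suc j - 1)) *\<^sub>R (x (Suc j) - x (Suc j - 1)) - g (Suc j - 1)) = - (1 / \<alpha> j) *\<^sub>R d j"
      unfolding d_def by simp
    hence "G j = norm (- (1 / \<alpha> j) *\<^sub>R d j)^2" unfolding G_def by (simp only:)
    also have "\<dots> = (1 / \<alpha> j)^2 * norm (d j)^2"
      using \<alpha>pos[of j] by (simp add: power_divide field_simps)
    finally have "G j = (1 / \<alpha> j)^2 * norm (d j)^2" .
    thus ?thesis using \<alpha>pos[of j] by (simp add: power2_eq_square)
  qed
  define M where "M = Min (G ` {..k})"
  have M0: "M \<ge> 0"
  proof -
    have "M \<in> G ` {..k}" unfolding M_def by (rule Min_in) auto
    thus ?thesis unfolding G_def by auto
  qed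
  have MG: "M \<le> G j" if "j \<le> k" for j
    unfolding M_def using that by (intro Min_le) auto
  define S where "S = (\<Sum>j\<le>k. 1 / (real j + 1) powr \<beta>)"
  have Sb: "S \<le> (real k + 1) powr (1 - \<beta>) / (1 - \<beta>)"
    unfolding S_def by (rule sum_powr_bound) (use \<beta> in auto)
  have s1: "(\<Sum>j\<le>k. \<alpha> j) * M \<le> (\<Sum>j\<le>k. \<alpha> j * G j)"
    unfolding sum_distrib_right
  proof (rule sum_mono)
    fix j assume "j \<in> {..k}"
    thus "\<alpha> j * M \<le> \<alpha> j * G j" using MG[of j] \<alpha>pos[of j] by (intro mult_left_mono) auto
  qed
  have s2: "(\<Sum>j\<le>k. \<alpha> j * G j) = 2 * (\<Sum>j\<le>k. norm (d j)^2 / (2 * \<alpha> j))"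
    unfolding Geq sum_distrib_left by (intro sum.cong) auto
  have s3: "(\<Sum>j\<le>k. \<alpha> j) * M \<le> 2 * (fx 0 - f_inf) + 2 * C * ((real k + 1) powr (1 - \<beta>) / (1 - \<beta>))"
  proof -
    have "(\<Sum>j\<le>k. \<alpha> j) * M \<le> 2 * (\<Sum>j\<le>k. norm (d j)^2 / (2 * \<alpha> j))"
      using s1 s2 by simp
    also have "\<dots> \<le> 2 * (fx 0 - fx (Suc k) + C * S)"
      using tele[of k] unfolding S_def by simp
    also have "\<dots> \<le> 2 * (fx 0 - f_inf) + 2 * C * ((real k + 1) powr (1 - \<beta>) / (1 - \<beta>))"
      using fl mult_left_mono[OF Sb C0] by simp
    finally show ?thesis .
  qed
  have sa: "(real k + 1) powr (1 - \<zeta>) / K \<le> (\<Sum>j\<le>k. \<alpha> j)"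
  proof -
    have mono: "\<alpha> k \<le> \<alpha> j" if "j \<le> k" for j
    proof -
      have "(real j + 1) powr \<zeta> \<le> (real k + 1) powr \<zeta>"
        using that \<zeta> by (intro powr_mono2) auto
      thus ?thesis unfolding \<alpha>eq using K pw1[of j]
        by (intro divide_left_mono mult_left_mono mult_pos_pos) auto
    qed
    have "(\<Sum>j\<le>k. \<alpha> k) \<le> (\<Sum>j\<le>k. \<alpha> j)" using mono by (intro sum_mono) auto
    moreover have "(\<Sum>j\<le>k. \<alpha> k) = (real k + 1) * \<alpha> k" by simp
    moreover have "(real k + 1) * \<alpha> k = (real k + 1) powr (1 - \<zeta>) / K"
      unfolding \<alpha>eq using K by (simp add: powr_diff)
    ultimately show ?thesis by simp
  qed
  define A where "A = fx 0 - f_inf"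
  define E where "E = (real k + 1) powr (1 - \<zeta>)"
  have E0: "E > 0" unfolding E_def by simp
  have MB: "M \<le> K * (2 * A + 2 * C * ((real k + 1) powr (1 - \<beta>) / (1 - \<beta>))) / E"
  proof -
    have "E / K * M \<le> (\<Sum>j\<le>k. \<alpha> j) * M"
      using sa M0 unfolding E_def by (intro mult_right_mono) auto
    with s3 have "E / K * M \<le> 2 * A + 2 * C * ((real k + 1) powr (1 - \<beta>) / (1 - \<beta>))"
      unfolding A_def by linarith
    thus ?thesis using K E0 by (simp add: field_simps)
  qed
  define T1 where "T1 = 2 * K * A / E"
  define T2 where "T2 = (2 - q) * K * \<delta> powr (2 / (2 - q)) / ((1 - \<beta>) * \<rho> powr (q / (2 - q)) * (real k + 1) powr (\<beta> - \<zeta>))"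
  have pd: "(real k + 1) powr (1 - \<beta>) / E = 1 / (real k + 1) powr (\<beta> - \<zeta>)"
  proof -
    have "(real k + 1) powr (\<beta> - \<zeta>) = (real k + 1) powr ((1 - \<zeta>) - (1 - \<beta>))" by simp
    also have "\<dots> = E / (real k + 1) powr (1 - \<beta>)" unfolding E_def by (rule powr_diff)
    finally show ?thesis by simp
  qed
  have MT: "M \<le> T1 + T2"
  proof -
    have "K * (2 * A + 2 * C * ((real k + 1) powr (1 - \<beta>) / (1 - \<beta>))) / E
        = 2 * K * A / E + 2 * K * C / (1 - \<beta>) * ((real k + 1) powr (1 - \<beta>) / E)"
      using E0 \<beta> by (simp add: field_simps)
    also have "\<dots> = T1 + T2"
    proof -
      have nz: "\<rho> powr (q / (2 - q)) > 0" "(real k + 1) powr (\<beta> - \<zeta>) > 0" "1 - \<beta> > 0"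
        using \<rho> \<beta> by auto
      have "2 * K * C / (1 - \<beta>) * (1 / (real k + 1) powr (\<beta> - \<zeta>)) = T2"
        unfolding T2_def C_def using nz by (simp add: field_simps)
      thus ?thesis unfolding pd T1_def by simp
    qed
    finally show ?thesis using MB by simp
  qed
  have T10: "T1 \<ge> 0" unfolding T1_def A_def using K A0 E0 by simp
  have T20: "T2 \<ge> 0" unfolding T2_def using K q \<beta> \<rho> by simp
  have z: "0 < 1 - \<zeta>" "1 - \<zeta> \<le> 1" using \<zeta> by auto
  have "T1 \<le> T1 / (1 - \<zeta>)" using T10 z by (simp add: le_divide_eq mult_left_le)
  moreover have "T2 \<le> T2 / (1 - \<zeta>)" using T20 z by (simp add: le_divide_eq mult_left_le)
  moreover have "T1 / (1 - \<zeta>) = 2 * (L + q * \<rho>) * (F (x 0) + real_of_ereal (h (x 0)) - f_inf)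
              / ((1 - \<zeta>) * (real k + 1) powr (1 - \<zeta>))"
    unfolding T1_def A_def E_def K_def fx_def by simp
  moreover have "T2 / (1 - \<zeta>) = (2 - q) * (L + q * \<rho>) * \<delta> powr (2 / (2 - q))
              / ((1 - \<zeta>) * (1 - \<beta>) * \<rho> powr (q / (2 - q)) * (real k + 1) powr (\<beta> - \<zeta>))"
    unfolding T2_def K_def by (simp add: mult.assoc)
  moreover have "(let p = (\<lambda>j. - (1 / \<alpha> (j - 1)) *\<^sub>R (x j - x (j - 1)) - g (j - 1)) in
          Min ((\<lambda>j. norm (g j + p (Suc j))^2) ` {..k})) = M"
    unfolding M_def G_def Let_def by simp
  ultimately show ?thesis using MT by linarith
qed
end
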